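(* Suppose the rate $\lambda$ of the Poisson arrival process satisfies $$\limsup_{T\to\infty}\frac1T\int_{-T}^0\lambda(x)\,dx<1,$$ and the service-time process $\mathcal{T}=(\eta_i)_{i\in\mathbb{Z}}$ is stationary and shift-ergodic with $\mathbb{E}(\eta_i)=1$. Then $\mathcal{S}(\bar\Omega)=1$, i.e. for $\mathcal{S}$-almost every $\omega$, the configuration $\theta_t\omega$ lies in $\tilde\Omega$ (so that the conflict resolution operator $\bar R(\theta_t\omega)$ is defined) for all $t\in\mathbb{R}$.
   Context: Single-server FIFO queue. Arrivals form a Poisson point process $\mathcal{P}_\lambda$ on $\mathbb{R}$ with continuous positive rate $\lambda$ satisfying $\int_{-\infty}^0\lambda=\int_0^\infty\lambda=\infty$, viewed as a sequence $\ldots<z_{-1}<z_0<z_1<\ldots$ with $z_0$ the smallest positive point. Service times $\eta_i>0$ form the process $\mathcal{T}$, independent of $\mathcal{P}_\lambda$; $\mathcal{S}=\mathcal{P}_\lambda\times\mathcal{T}$ on $\Omega=\{\omega=(\ldots,(z_i,\eta_i),\ldots)\}$. Nonlinear shift: $\theta_t(x)$ is the unique value with $\int_x^{\theta_t(x)}\lambda(y)\,dy=t$; $\theta_t\omega=(\ldots,(\theta_t(z_i),\eta_i),\ldots)$, with $z_0$ relabeled as the smallest positive point. Conflict resolution: let $I(\omega)$ be the set of indices $i$ with $z_i\ge z_{i-k}+\eta_{i-k}$ for all $k>0$. If $I(\omega)=\{\ldots<i_{-1}<i_0<i_1<\ldots\}$ is doubly infinite, define $R\omega$ by $Rz_j=z_j$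 for $j\in I(\omega)$ and $Rz_j=z_{i_k}+\eta_{i_k}+\cdots+\eta_{j-1}$ for $i_k<j<i_{k+1}$; $\bar R$ denotes the pointwise limit of $R^n$ when all $R^n\omega$ are defined and each $R^nz_j$ is eventually constant. $\tilde\Omega$ is the set of $\omega$ violating only finitely many of the conditions $\sum_{i=-k}^{-1}\eta_i+z_{-k}<0$, $k=1,2,\ldots$ (for such $\omega$, $\bar R\omega$ is defined), and $\bar\Omega=\bigcap_{t\in\mathbb{R}}\theta_t\tilde\Omega$. *)

theory Defs
  imports "HOL-Probability.Probability"
begin

text \<open>Configurations: \<omega> = (z, \<eta>) with z, \<eta> :: int \<Rightarrow> real; z i is the i-th arrival
  point (z 0 the smallest positive point) and \<eta> i its service time.\<close>

definition poisson_prob :: "real \<Rightarrow> nat \<Rightarrow> real" where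
  "poisson_prob mu n = mu ^ n / fact n * exp (- mu)"

definition npts :: "(int \<Rightarrow> real) \<Rightarrow> real set \<Rightarrow> nat" where
  "npts z A = card {i. z i \<in> A}"

definition poisson_process :: "(real \<Rightarrow> real) \<Rightarrow> (int \<Rightarrow> real) measure \<Rightarrow> bool" where
  "poisson_process lam P \<longleftrightarrow>
     prob_space P \<and> sets P = sets (PiM UNIV (\<lambda>_::int. borel)) \<and>
     (AE z in P. strict_mono z \<and> z (-1) \<le> 0 \<and> 0 < z 0) \<and>
     (\<forall>(m::nat) (A :: nat \<Rightarrow> real set) (n :: nat \<Rightarrow> nat).
        (\<forall>j<m. A j \<in> sets borel \<and> bounded (A j)) \<and> disjoint_family_on A {..<m} \<longrightarrow>
        measure P {z. \<forall>j<m. finite {i. z i \<in> A j} \<and> npts z (A j) = n j}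
          = (\<Prod>j<m. poisson_prob (LINT x:A j|lborel. lam x) (n j)))"

definition seq_shift :: "(int \<Rightarrow> real) \<Rightarrow> int \<Rightarrow> real" where
  "seq_shift \<eta> = (\<lambda>i. \<eta> (i + 1))"

definition stationary_ergodic_service :: "(int \<Rightarrow> real) measure \<Rightarrow> bool" where
  "stationary_ergodic_service Q \<longleftrightarrow>
     prob_space Q \<and> sets Q = sets (PiM UNIV (\<lambda>_::int. borel)) \<and>
     (AE \<eta> in Q. \<forall>i. 0 < \<eta> i) \<and>
     distr Q (PiM UNIV (\<lambda>_::int. borel)) seq_shift = Q \<and>
     (\<forall>A \<in> sets Q. seq_shift -` A \<inter> space Q = A \<longrightarrow> measure Q A = 0 \<or> measure Q A = 1)"

definition theta :: "(real \<Rightarrow> real) \<Rightarrow> real \<Rightarrow> real \<Rightarrow> real" where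
  "theta lam t x = (THE y. (LBINT s=x..y. lam s) = t)"

definition theta_conf :: "(real \<Rightarrow> real) \<Rightarrow> real \<Rightarrow> (int \<Rightarrow> real) \<times> (int \<Rightarrow> real)
    \<Rightarrow> (int \<Rightarrow> real) \<times> (int \<Rightarrow> real)" where
  "theta_conf lam t \<omega> =
     (let z = fst \<omega>; \<eta> = snd \<omega>;
          k = (THE k. theta lam t (z (k - 1)) \<le> 0 \<and> 0 < theta lam t (z k))
      in (\<lambda>j. theta lam t (z (j + k)), \<lambda>j. \<eta> (j + k)))"

definition Omega_tilde :: "((int \<Rightarrow> real) \<times> (int \<Rightarrow> real)) set" where
  "Omega_tilde = {(z, \<eta>). finite {k::nat. 1 \<le> k \<and>
       \<not> ((\<Sum>i\<in>{- int k .. -1}. \<eta> i) + z (- int k) < 0)}}"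

end

theory Submission
  imports Defs
begin


lemma cover_ineq:
  fixes h :: "nat \<Rightarrow> real" and E :: "nat \<Rightarrow> bool" and a :: real
  assumes h: "\<And>i. 0 \<le> h i" and a: "0 < a"
    and good: "\<And>j. \<not> E j \<Longrightarrow> \<exists>l. 1 \<le> l \<and> l \<le> N \<and> a * real l < (\<Sum>i<l. h (j+i))"
  shows "a * (real L - real N) \<le> (\<Sum>j<L. h j + (if E j then a else 0))"
proof -
  define g where "g j = h j + (if E j then a else 0)" for j
  have g0: "0 \<le> g j" for j using h a by (simp add: g_def)
  have main: "d \<le> L \<Longrightarrow> a * (real L - real N - real (L-d)) \<le> sum g {L-d..<L}" for d
  proof (induction d rule: less_induct)
    case (less d)
    show ?case
    proof (cases "d \<le> N")
      case True
      then have "a * (real L - real N - real (L-d)) \<le> 0"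
        using less.prems a by (simp add: of_nat_diff mult_nonneg_nonpos)
      also have "0 \<le> sum g {L-d..<L}" by (intro sum_nonneg g0)
      finally show ?thesis .
    next
      case False
      define j where "j = L - d"
      show ?thesis
      proof (cases "E j")
        case True
        have IH: "a * (real L - real N - real (L-(d-1))) \<le> sum g {L-(d-1)..<L}"
          using less.IH[of "d-1"] False less.prems by auto
        have "L - (d-1) = Suc j" using False less.prems by (simp add: j_def)
        moreover have "sum g {j..<L} = g j + sum g {Suc j..<L}"
          using False less.prems j_def by (intro sum.atLeast_Suc_lessThan) auto
        moreover have "g j \<ge> a" using True h by (simp add: g_def)
        moreover have "real (Suc j) = real j + 1" by simp
        ultimately show ?thesis using IH unfolding j_def[symmetric] by (simp add: algebra_simps)
      next
        case nE: False
        obtain l where l: "1 \<le> l" "l \<le> N" "a * real l < (\<Sum>i<l. h (j+i))"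
          using good[OF nE] by blast
        have IH: "a * (real L - real N - real (L-(d-l))) \<le> sum g {L-(d-l)..<L}"
          using less.IH[of "d-l"] False less.prems l by auto
        have e1: "L - (d-l) = j + l" using False less.prems l by (simp add: j_def)
        have "sum g {j..<L} = sum g {j..<j+l} + sum g {j+l..<L}"
          using False l less.prems j_def by (intro sum.atLeastLessThan_concat[symmetric]) auto
        moreover have "sum g {j..<j+l} \<ge> (\<Sum>i<l. h (j+i))"
        proof -
          have "sum g {j..<j+l} = (\<Sum>i<l. g (j+i))"
            by (simp add: sum.atLeastLessThan_shift_0[of g j "j+l"] atLeast0LessThan add.commute)
          also have "\<dots> \<ge> (\<Sum>i<l. h (j+i))" by (intro sum_mono) (use a in \<open>simp add: g_def\<close>)
          finally show ?thesis .
        qed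
        ultimately show ?thesis using IH l(3) unfolding e1 j_def[symmetric]
          by (simp add: algebra_simps)
      qed
    qed
  qed
  from main[of L] show ?thesis by (simp add: g_def atLeast0LessThan)
qed

lemma funpow_measurable:
  assumes "T \<in> M \<rightarrow>\<^sub>M M" shows "(T ^^ j) \<in> M \<rightarrow>\<^sub>M M"
proof (induction j)
  case (Suc j) then show ?case using measurable_compose[OF Suc assms] by simp
qed simp

lemma funpow_distr:
  assumes "T \<in> M \<rightarrow>\<^sub>M M" "distr M M T = M" shows "distr M M (T ^^ j) = M"
proof (induction j)
  case 0 then show ?case by (simp add: distr_id2)
next
  case (Suc j)
  have "distr M M (T ^^ Suc j) = distr M M ((T ^^ j) \<circ> T)" by (simp only: funpow_Suc_right)
  also have "\<dots> = distr (distr M M T) M (T ^^ j)"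
    by (rule distr_distr[symmetric]) (use funpow_measurable[OF assms(1)] assms(1) in auto)
  also have "\<dots> = M" using Suc assms(2) by simp
  finally show ?case .
qed

lemma integral_funpow:
  fixes g :: "'a \<Rightarrow> real"
  assumes "T \<in> M \<rightarrow>\<^sub>M M" "distr M M T = M" "g \<in> borel_measurable M"
  shows "(\<integral>x. g ((T ^^ j) x) \<partial>M) = integral\<^sup>L M g"
    and "integrable M g \<Longrightarrow> integrable M (\<lambda>x. g ((T ^^ j) x))"
proof -
  have m: "(T ^^ j) \<in> M \<rightarrow>\<^sub>M M" by (rule funpow_measurable[OF assms(1)])
  have "integral\<^sup>L M g = integral\<^sup>L (distr M M (T ^^ j)) g" using funpow_distr[OF assms(1,2)] by simp
  also have "\<dots> = (\<integral>x. g ((T ^^ j) x) \<partial>M)" by (rule integral_distr[OF m assms(3)])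
  finally show "(\<integral>x. g ((T ^^ j) x) \<partial>M) = integral\<^sup>L M g" by simp
  assume "integrable M g"
  then have "integrable (distr M M (T ^^ j)) g" using funpow_distr[OF assms(1,2)] by simp
  then show "integrable M (\<lambda>x. g ((T ^^ j) x))" using integrable_distr_eq[OF m assms(3)] by simp
qed

lemma ergodic_upper:
  fixes M :: "'a measure" and T and f :: "'a \<Rightarrow> real" and b :: real
  assumes P: "prob_space M" and Tm: "T \<in> M \<rightarrow>\<^sub>M M" and Td: "distr M M T = M"
    and erg: "\<And>A. A \<in> sets M \<Longrightarrow> T -` A \<inter> space M = A \<Longrightarrow> measure M A = 0 \<or> measure M A = 1"
    and fm: "f \<in> borel_measurable M" and f0: "\<And>x. x \<in> space M \<Longrightarrow> 0 \<le> f x"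
    and fi: "integrable M f" and b: "integral\<^sup>L M f < b"
  shows "AE x in M. eventually (\<lambda>k. (\<Sum>j<k. f ((T ^^ j) x)) \<le> b * real k) sequentially"
proof -
  interpret prob_space M by fact
  define S where "S k x = (\<Sum>j<k. f ((T ^^ j) x))" for k x
  have fTm: "(\<lambda>x. f ((T ^^ j) x)) \<in> borel_measurable M" for j
    by (rule measurable_compose[OF funpow_measurable[OF Tm] fm])
  have Sm[measurable]: "(\<lambda>x. S k x) \<in> borel_measurable M" for k
    unfolding S_def by (intro borel_measurable_sum fTm)
  have Tsp: "x \<in> space M \<Longrightarrow> (T ^^ j) x \<in> space M" for x j
    using measurable_space[OF funpow_measurable[OF Tm]] by blast
  have ST: "S (Suc k) x = f x + S k (T x)" for k x
    unfolding S_def sum.lessThan_Suc_shift by (simp add: funpow_Suc_right del: funpow.simps)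
  have intf0: "0 \<le> integral\<^sup>L M f" using f0 by (intro integral_nonneg_AE) auto
  have key: "\<not> (AE x in M. \<exists>k\<ge>1. S k x > a * real k)" if a: "integral\<^sup>L M f < a" for a
  proof
    assume ae: "AE x in M. \<exists>k\<ge>1. S k x > a * real k"
    have a0: "0 < a" using a intf0 by linarith
    define E where "E N = {x\<in>space M. \<forall>l\<in>{1..N}. S l x \<le> a * real l}" for N
    have Em[measurable]: "E N \<in> sets M" for N unfolding E_def by measurable
    have dec: "decseq E" unfolding decseq_def E_def by auto
    have "AE x in M. x \<notin> (\<Inter>N. E N)"
      using ae by eventually_elim (auto simp: E_def not_le, meson atLeastAtMost_iff order_refl)
    then have "prob (\<Inter>N. E N) = 0" by (subst prob_eq_0) auto
    then have lim: "(\<lambda>N. prob (E N)) \<longlonglongrightarrow> 0"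
    proof -
      have "range E \<subseteq> sets M" using Em by blast
      then show ?thesis using finite_Lim_measure_decseq[of E] dec \<open>prob (\<Inter>N. E N) = 0\<close> by simp
    qed
    define eps where "eps = (a - integral\<^sup>L M f) / (2*a)"
    have eps0: "0 < eps" using a a0 by (simp add: eps_def)
    obtain N where N: "prob (E N) < eps"
      using order_tendstoD(2)[OF lim eps0] by (auto simp: eventually_sequentially)
    define L :: nat where "L = nat \<lceil>2*a*real N/(a - integral\<^sup>L M f)\<rceil> + 1"
    have L: "real L > 2*a*real N/(a - integral\<^sup>L M f)"
      unfolding L_def using real_nat_ceiling_ge[of "2*a*real N/(a - integral\<^sup>L M f)"] by linarith
    define g where "g x = f x + a * indicator (E N) x" for x
    have gm: "g \<in> borel_measurable M" unfolding g_def using fm by measurable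
    have gi: "integrable M g" unfolding g_def
      by (intro Bochner_Integration.integrable_add fi integrable_mult_right integrable_real_indicator Em) (auto simp: less_top[symmetric])
    have gint: "integral\<^sup>L M g = integral\<^sup>L M f + a * prob (E N)"
    proof -
      have ii: "integrable M (\<lambda>x. a * indicator (E N) x :: real)"
        by (intro integrable_mult_right integrable_real_indicator Em) (auto simp: less_top[symmetric])
      have "integral\<^sup>L M g = integral\<^sup>L M f + (\<integral>x. a * indicator (E N) x \<partial>M)"
        unfolding g_def by (rule Bochner_Integration.integral_add[OF fi ii])
      also have "(\<integral>x. a * indicator (E N) x \<partial>M) = a * prob (E N)"
        using Em[of N] by (simp add: Int_absorb2 sets.sets_into_space)
      finally show ?thesis .
    qed
    have pw: "a * (real L - real N) \<le> (\<Sum>j<L. g ((T ^^ j) x))" if x: "x \<in> space M" for x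
    proof -
      have "a * (real L - real N) \<le> (\<Sum>j<L. f ((T ^^ j) x) + (if (T ^^ j) x \<in> E N then a else 0))"
      proof (rule cover_ineq)
        show "0 \<le> f ((T ^^ i) x)" for i using f0 Tsp[OF x] by auto
        show "0 < a" by fact
        fix j assume "(T ^^ j) x \<notin> E N"
        then obtain l where l: "l \<in> {1..N}" "S l ((T ^^ j) x) > a * real l"
          using Tsp[OF x] by (auto simp: E_def not_le)
        have "S l ((T ^^ j) x) = (\<Sum>i<l. f ((T ^^ (j + i)) x))"
          unfolding S_def by (intro sum.cong) (auto simp: funpow_add add.commute)
        then show "\<exists>l\<ge>1. l \<le> N \<and> a * real l < (\<Sum>i<l. f ((T ^^ (j + i)) x))"
          using l by auto
      qed
      also have "\<dots> = (\<Sum>j<L. g ((T ^^ j) x))"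
        by (intro sum.cong) (auto simp: g_def)
      finally show ?thesis .
    qed
    have "a * (real L - real N) = (\<integral>x. a * (real L - real N) \<partial>M)" by (simp add: prob_space)
    also have "\<dots> \<le> (\<integral>x. (\<Sum>j<L. g ((T ^^ j) x)) \<partial>M)"
    proof (rule integral_mono)
      show "integrable M (\<lambda>x. \<Sum>j<L. g ((T ^^ j) x))"
        by (rule Bochner_Integration.integrable_sum) (rule integral_funpow(2)[OF Tm Td gm gi])
    qed (use pw in auto)
    also have "\<dots> = (\<Sum>j<L. integral\<^sup>L M g)"
      by (subst Bochner_Integration.integral_sum) (auto intro: integral_funpow(2)[OF Tm Td gm gi] simp: integral_funpow(1)[OF Tm Td gm])
    also have "\<dots> = real L * (integral\<^sup>L M f + a * prob (E N))" by (simp add: gint)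
    finally have ineq: "a * (real L - real N) \<le> real L * (integral\<^sup>L M f + a * prob (E N))" .
    have "real L * (a * prob (E N)) \<le> real L * (a * eps)"
      using N a0 by (intro mult_left_mono) auto
    moreover have "a * eps = (a - integral\<^sup>L M f) / 2" using a0 by (simp add: eps_def)
    moreover have "real L * (integral\<^sup>L M f + a * prob (E N)) = real L * integral\<^sup>L M f + real L * (a * prob (E N))"
      by (simp add: distrib_left)
    ultimately have "a * (real L - real N) \<le> real L * integral\<^sup>L M f + real L * ((a - integral\<^sup>L M f) / 2)"
      using ineq by (metis (no_types, lifting) add_left_mono order_trans)
    then have "real L * (a - integral\<^sup>L M f) \<le> 2 * a * real N" by (simp add: field_simps; linarith)
    moreover have "2*a*real N < real L * (a - integral\<^sup>L M f)"
      using L a by (simp add: field_simps)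
    ultimately show False by linarith
  qed
  define a where "a = (integral\<^sup>L M f + b) / 2"
  have a: "integral\<^sup>L M f < a" "a < b" using b by (auto simp: a_def)
  define c where "c n = a + 1 / real (Suc n)" for n
  have cdec: "c (Suc n) < c n" for n by (simp add: c_def frac_less2)
  have cge: "a < c n" for n by (simp add: c_def)
  define D where "D = {x\<in>space M. \<exists>n::nat. \<forall>K. \<exists>k\<ge>K. S k x > c n * real k}"
  have Dm: "D \<in> sets M" unfolding D_def by measurable
  have inv: "T -` D \<inter> space M = D"
  proof (intro set_eqI iffI)
    fix x assume "x \<in> T -` D \<inter> space M"
    then have x: "x \<in> space M" and "T x \<in> D" by auto
    then obtain n where n: "\<forall>K. \<exists>k\<ge>K. S k (T x) > c n * real k" by (auto simp: D_def)
    define K1 where "K1 = nat \<lceil>c (Suc n) / (c n - c (Suc n))\<rceil>"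
    have K1: "c (Suc n) \<le> real K1 * (c n - c (Suc n))"
      using real_nat_ceiling_ge[of "c (Suc n) / (c n - c (Suc n))"] cdec[of n]
      by (simp add: K1_def field_simps)
    have "\<forall>K. \<exists>k\<ge>K. S k x > c (Suc n) * real k"
    proof
      fix K
      obtain k where k: "k \<ge> max K K1" "S k (T x) > c n * real k" using n by blast
      have "c (Suc n) * real (Suc k) \<le> c n * real k"
      proof -
        have "real K1 \<le> real k" using k by auto
        then have "real K1 * (c n - c (Suc n)) \<le> real k * (c n - c (Suc n))"
          using cdec[of n] by (intro mult_right_mono) auto
        then show ?thesis using K1 by (simp add: algebra_simps)
      qed
      also have "\<dots> < S k (T x)" by fact
      also have "\<dots> \<le> S (Suc k) x" using ST f0[OF x] by simp
      finally show "\<exists>k\<ge>K. S k x > c (Suc n) * real k" using k by (intro exI[of _ "Suc k"]) auto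
    qed
    then show "x \<in> D" using x by (auto simp: D_def)
  next
    fix x assume "x \<in> D"
    then have x: "x \<in> space M" and "\<exists>n. \<forall>K. \<exists>k\<ge>K. S k x > c n * real k" by (auto simp: D_def)
    then obtain n where n: "\<forall>K. \<exists>k\<ge>K. S k x > c n * real k" by blast
    define K1 where "K1 = nat \<lceil>(f x - c n) / (c n - c (Suc n))\<rceil>"
    have K1: "f x - c n \<le> real K1 * (c n - c (Suc n))"
      using real_nat_ceiling_ge[of "(f x - c n) / (c n - c (Suc n))"] cdec[of n]
      by (simp add: K1_def field_simps)
    have "\<forall>K. \<exists>k\<ge>K. S k (T x) > c (Suc n) * real k"
    proof
      fix K
      obtain k where k: "k \<ge> max (Suc K) (Suc K1)" "S k x > c n * real k" using n by blast
      then obtain k' where k': "k = Suc k'" by (cases k) auto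
      have "c (Suc n) * real k' \<le> c n * real (Suc k') - f x"
      proof -
        have "real K1 \<le> real k'" using k k' by auto
        then have "real K1 * (c n - c (Suc n)) \<le> real k' * (c n - c (Suc n))"
          using cdec[of n] by (intro mult_right_mono) auto
        then show ?thesis using K1 by (simp add: algebra_simps)
      qed
      also have "\<dots> < S k' (T x)" using k ST[of k' x] k' by simp
      finally show "\<exists>k\<ge>K. S k (T x) > c (Suc n) * real k" using k k' by (intro exI[of _ k']) auto
    qed
    moreover have "T x \<in> space M" using Tm x by (auto dest: measurable_space)
    ultimately show "x \<in> T -` D \<inter> space M" using x by (auto simp: D_def)
  qed
  have "prob D \<noteq> 1"
  proof
    assume "prob D = 1"
    then have "AE x in M. x \<in> D" by (rule AE_prob_1)
    then have "AE x in M. \<exists>k\<ge>1. S k x > a * real k"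
    proof eventually_elim
      case (elim x)
      then obtain n where "\<forall>K. \<exists>k\<ge>K. S k x > c n * real k" by (auto simp: D_def)
      then obtain k where k: "k \<ge> 1" "S k x > c n * real k" by blast
      have "a * real k \<le> c n * real k" using cge[of n] by (intro mult_right_mono) auto
      then show ?case using k by (intro exI[of _ k]) linarith
    qed
    then show False using key[OF a(1)] by blast
  qed
  then have "prob D = 0" using erg[OF Dm inv] by blast
  then have aeD: "AE x in M. x \<notin> D" using prob_eq_0[OF Dm] by simp
  obtain n0 where n0: "1 / real (Suc n0) < b - a"
    using a(2) by (metis diff_gt_0_iff_gt nat_approx_posE)
  show ?thesis
    using aeD AE_space
  proof eventually_elim
    case (elim x)
    show ?case
    proof -
      from elim have "\<not> (\<forall>K. \<exists>k\<ge>K. S k x > c n0 * real k)" by (auto simp: D_def)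
      then obtain K where K: "\<And>k. k \<ge> K \<Longrightarrow> S k x \<le> c n0 * real k" by (auto simp: not_less)
      have "c n0 \<le> b" using n0 by (simp add: c_def)
      then have "\<And>k. k \<ge> K \<Longrightarrow> S k x \<le> b * real k"
        using K by (meson mult_right_mono of_nat_0_le_iff order_trans)
      then show ?thesis by (auto simp: S_def eventually_sequentially)
    qed
  qed
qed



definition Lam :: "(real \<Rightarrow> real) \<Rightarrow> real \<Rightarrow> real" where
  "Lam lam x = (LBINT s=ereal 0..ereal x. lam s)"

locale rate =
  fixes lam :: "real \<Rightarrow> real"
  assumes lam_cont: "continuous_on UNIV lam"
    and lam_pos: "\<And>x. 0 < lam x"
    and lam_int_neg: "filterlim (\<lambda>T::real. LBINT x=ereal (-T)..0. lam x) at_top at_top"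
    and lam_int_pos: "filterlim (\<lambda>T::real. LBINT x=0..ereal T. lam x) at_top at_top"
begin

lemma Lam_deriv: "(Lam lam has_real_derivative lam x) (at x)"
proof -
  define R where "R = \<bar>x\<bar> + 1"
  have c: "continuous_on {-R..R} lam" using lam_cont by (rule continuous_on_subset) auto
  have d: "((\<lambda>u. LBINT y=ereal 0..ereal u. lam y) has_vector_derivative lam x) (at x within {-R..R})"
    by (rule interval_integral_FTC2[OF _ _ c]) (auto simp: R_def)
  have i: "x \<in> interior {-R..R}" unfolding interior_atLeastAtMost_real R_def by (simp; linarith)
  have "((\<lambda>u. LBINT y=ereal 0..ereal u. lam y) has_vector_derivative lam x) (at x)"
    using d unfolding at_within_interior[OF i] .
  then show ?thesis unfolding Lam_def[abs_def] by (simp add: has_real_derivative_iff_has_vector_derivative)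
qed

lemma Lam_cont: "continuous_on UNIV (Lam lam)"
  using Lam_deriv by (meson DERIV_isCont continuous_at_imp_continuous_on)

lemma Lam_mono: "x < y \<Longrightarrow> Lam lam x < Lam lam y"
  by (rule DERIV_pos_imp_increasing[of x y "Lam lam"]) (use Lam_deriv lam_pos in blast)+

lemma Lam_le_iff: "Lam lam x \<le> Lam lam y \<longleftrightarrow> x \<le> y"
proof
  assume a: "Lam lam x \<le> Lam lam y"
  show "x \<le> y"
  proof (rule ccontr)
    assume "\<not> x \<le> y"
    then have "y < x" by simp
    then have "Lam lam y < Lam lam x" by (rule Lam_mono)
    then show False using a by simp
  qed
next
  assume "x \<le> y"
  then show "Lam lam x \<le> Lam lam y" using Lam_mono[of x y] by (cases "x = y") auto
qed

lemma Lam_diff: "(LBINT s=ereal x..ereal y. lam s) = Lam lam y - Lam lam x"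
proof (rule interval_integral_FTC_finite)
  show "continuous_on {min x y..max x y} lam" using lam_cont by (rule continuous_on_subset) auto
  show "(Lam lam has_vector_derivative lam u) (at u within {min x y..max x y})" for u
    using Lam_deriv[of u] by (simp add: has_real_derivative_iff_has_vector_derivative has_vector_derivative_at_within)
qed

lemma Lam_0: "Lam lam 0 = 0"
  unfolding Lam_def by simp

lemma Lam_neg_eq: "(LBINT x=ereal (-T)..0. lam x) = - Lam lam (-T)"
  using Lam_diff[of "-T" 0] by (simp add: Lam_0 zero_ereal_def)

lemma Lam_neg_lim: "filterlim (\<lambda>T. - Lam lam (-T)) at_top at_top"
proof -
  have "(LBINT x=ereal (-T)..0. lam x) = - Lam lam (-T)" for T
    using Lam_diff[of "-T" 0] by (simp add: Lam_0 zero_ereal_def)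
  then show ?thesis using lam_int_neg by simp
qed

lemma Lam_pos_lim: "filterlim (\<lambda>T. Lam lam T) at_top at_top"
proof -
  have "(LBINT x=0..ereal T. lam x) = Lam lam T" for T
    by (simp add: Lam_def zero_ereal_def)
  then show ?thesis using lam_int_pos by simp
qed

lemma Lam_surj: "\<exists>x. Lam lam x = v"
proof -
  obtain T where T: "- Lam lam (-T) \<ge> - v"
    using filterlim_at_top[THEN iffD1, OF Lam_neg_lim, rule_format, of "-v"]
    by (auto simp: eventually_at_top_linorder)
  obtain T' where T': "Lam lam T' \<ge> v"
    using filterlim_at_top[THEN iffD1, OF Lam_pos_lim, rule_format, of "v"]
    by (auto simp: eventually_at_top_linorder)
  have le: "-T \<le> T'" using T T' Lam_le_iff[of "-T" T'] by linarith
  have T1: "Lam lam (-T) \<le> v" using T by simp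
  have "continuous_on {-T..T'} (Lam lam)" using Lam_cont by (rule continuous_on_subset) auto
  then show ?thesis
    using IVT'[of "Lam lam" "-T" v T', OF T1 T' le] by blast
qed

lemma theta_Lam: "Lam lam (theta lam t x) = Lam lam x + t"
proof -
  obtain y where y: "Lam lam y = Lam lam x + t" using Lam_surj by blast
  have "theta lam t x = y"
    unfolding theta_def
  proof (rule the_equality)
    show "(LBINT s=ereal x..ereal y. lam s) = t" using y Lam_diff by simp
    fix y' assume "(LBINT s=ereal x..ereal y'. lam s) = t"
    then have "Lam lam y' = Lam lam y" using y Lam_diff by simp
    then show "y' = y" using Lam_mono[of y y'] Lam_mono[of y' y] by (cases y y' rule: linorder_cases) auto
  qed
  then show ?thesis using y by simp
qed

end


lemma exp_sums_real: "(\<lambda>n. x^n / fact n) sums exp (x::real)"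
  using exp_converges[of x] by (simp add: divide_inverse_commute scaleR_conv_of_real)

lemma poisson_tail:
  fixes mu s :: real and K :: nat
  assumes mu: "0 < mu" and s: "1 < s"
  shows "1 - (\<Sum>j\<le>K. poisson_prob mu j) \<le> exp (mu * (s - 1)) / s ^ (K+1)"
proof -
  define a where "a j = mu^j / fact j" for j
  define b where "b j = (s*mu)^j / fact j / s^(K+1)" for j
  have as: "a sums exp mu" unfolding a_def by (rule exp_sums_real)
  have bs: "b sums (exp (s*mu) / s^(K+1))" unfolding b_def by (intro sums_divide exp_sums_real)
  have a1: "(\<lambda>j. if j \<in> {..K} then a j else 0) sums (\<Sum>j\<le>K. a j)" by (rule sums_If_finite_set) simp
  have a2: "(\<lambda>j. a j - (if j \<in> {..K} then a j else 0)) sums (exp mu - (\<Sum>j\<le>K. a j))"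
    by (rule sums_diff[OF as a1])
  have le: "a j - (if j \<in> {..K} then a j else 0) \<le> b j" for j
  proof (cases "j \<le> K")
    case True then show ?thesis using mu s by (simp add: b_def)
  next
    case False
    have "s^(K+1) \<le> s^j" using False s by (intro power_increasing) auto
    then have "mu^j * s^(K+1) \<le> mu^j * s^j" using mu by (intro mult_left_mono) auto
    then have "mu^j / fact j \<le> (s*mu)^j / fact j / s^(K+1)"
      using s by (simp add: field_simps power_mult_distrib)
    then show ?thesis using False by (simp add: a_def b_def)
  qed
  have main: "exp mu - (\<Sum>j\<le>K. a j) \<le> exp (s*mu) / s^(K+1)"
    by (rule sums_le[OF le a2 bs])
  have "1 - (\<Sum>j\<le>K. poisson_prob mu j) = exp (-mu) * (exp mu - (\<Sum>j\<le>K. a j))"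
    by (simp add: poisson_prob_def a_def algebra_simps sum_distrib_left sum_distrib_right exp_minus field_simps)
  also have "\<dots> \<le> exp (-mu) * (exp (s*mu) / s^(K+1))"
    by (intro mult_left_mono main) auto
  also have "\<dots> = exp (mu * (s - 1)) / s ^ (K+1)"
    by (simp add: exp_add[symmetric] algebra_simps)
  finally show ?thesis .
qed

lemma chernoff_exponent:
  fixes r s :: real assumes "1 < s" "s < r"
  shows "s - 1 - r * ln s < 0"
proof -
  have "ln (1/s) \<le> 1/s - 1" using assms by (intro ln_le_minus_one) auto
  then have l: "1 - 1/s \<le> ln s" using assms by (simp add: ln_div)
  have "r * (1 - 1/s) \<le> r * ln s" using l assms by (intro mult_left_mono) auto
  moreover have "s - 1 < r * (1 - 1/s)"
  proof -
    have "s * (s - 1) < r * (s - 1)" using assms by (intro mult_strict_right_mono) auto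
    then show ?thesis using assms by (simp add: field_simps)
  qed
  ultimately show ?thesis by linarith
qed

lemma poisson_tail_geom:
  fixes r s :: real and n :: nat
  assumes s: "1 < s" "s < r"
  shows "1 - (\<Sum>j\<le>nat \<lfloor>r * real (Suc n)\<rfloor>. poisson_prob (real (Suc n)) j)
           \<le> exp (s - 1 - r * ln s) ^ Suc n"
proof -
  define mu where "mu = real (Suc n)"
  define K where "K = nat \<lfloor>r * mu\<rfloor>"
  have mu: "0 < mu" by (simp add: mu_def)
  have K: "r * mu \<le> real K + 1"
    unfolding K_def using mu s by linarith
  have lns: "0 < ln s" using s by simp
  have "exp (r * mu * ln s) \<le> exp ((real K + 1) * ln s)"
    using K lns by (intro exp_mono mult_right_mono) auto
  also have "\<dots> = s ^ (K+1)"
  proof -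
    have "s powr real (K+1) = s^(K+1)" by (rule powr_realpow) (use s in auto)
    moreover have "s powr real (K+1) = exp ((real K + 1) * ln s)"
      using s by (simp add: powr_def mult.commute)
    ultimately show ?thesis by simp
  qed
  finally have sK: "exp (r * mu * ln s) \<le> s ^ (K+1)" .
  have "1 - (\<Sum>j\<le>K. poisson_prob mu j) \<le> exp (mu * (s - 1)) / s ^ (K+1)"
    by (rule poisson_tail[OF mu s(1)])
  also have "\<dots> \<le> exp (mu * (s - 1)) / exp (r * mu * ln s)"
    using s by (intro divide_left_mono sK) auto
  also have "\<dots> = exp (mu * (s - 1 - r * ln s))"
    by (simp add: exp_diff[symmetric] algebra_simps)
  also have "\<dots> = exp (s - 1 - r * ln s) ^ Suc n"
    unfolding mu_def by (subst exp_of_nat_mult[symmetric]) simp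
  finally show ?thesis unfolding K_def mu_def .
qed

context rate begin

lemma det_count:
  fixes z :: "int \<Rightarrow> real" and y :: "nat \<Rightarrow> real"
  assumes sm: "strict_mono z" and z1: "z (-1) \<le> 0" and r: "1 < r"
    and ev: "\<forall>n\<ge>n0. finite {i. z i \<in> {y n<..<0}} \<and> card {i. z i \<in> {y n<..<0}} \<le> nat \<lfloor>r * real (Suc n)\<rfloor>"
    and y: "\<And>n. Lam lam (y n) = - real (Suc n)"
  shows "\<exists>M0. \<forall>m\<ge>M0. real m / r - 3 \<le> - Lam lam (z (- int m))"
proof (intro exI allI impI)
  fix m :: nat
  assume m: "nat \<lceil>r * (real n0 + 1) + 2\<rceil> \<le> m"
  have m': "r * (real n0 + 1) + 2 \<le> real m"
  proof -
    have "real (nat \<lceil>r * (real n0 + 1) + 2\<rceil>) \<le> real m" using m by (simp only: of_nat_le_iff)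
    then show ?thesis using real_nat_ceiling_ge[of "r * (real n0 + 1) + 2"] by linarith
  qed
  have "0 \<le> r * (real n0 + 1)" using r by simp
  then have "2 \<le> real m" using m' by linarith
  then have m2: "2 \<le> m" by linarith
  define F where "F = \<lfloor>(real m - 2) / r\<rfloor>"
  have "real n0 + 1 \<le> (real m - 2) / r" using m' r by (simp add: field_simps)
  then have F1: "int n0 + 1 \<le> F" unfolding F_def by (simp add: le_floor_iff)
  define n where "n = nat F - 1"
  have Sn: "real (Suc n) = real_of_int F" using F1 by (simp add: n_def)
  have nn0: "n0 \<le> n" using F1 by (simp add: n_def)
  have "r * real_of_int F \<le> r * ((real m - 2) / r)"
    using r unfolding F_def by (intro mult_left_mono) auto
  also have "\<dots> = real m - 2" using r by simp
  finally have rF: "r * real_of_int F \<le> real m - 2" .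
  have Kle: "nat \<lfloor>r * real (Suc n)\<rfloor> \<le> m - 2"
  proof -
    have "\<lfloor>r * real (Suc n)\<rfloor> \<le> int m - 2" using rF Sn by (simp add: floor_le_iff)
    then show ?thesis using m2 by linarith
  qed
  have zy: "z (- int m) \<le> y n"
  proof (rule ccontr)
    assume "\<not> z (- int m) \<le> y n"
    then have zm: "y n < z (- int m)" by simp
    have sub: "{- int m..-2} \<subseteq> {i. z i \<in> {y n<..<0}}"
    proof
      fix i assume i: "i \<in> {- int m..-2}"
      have "z (- int m) \<le> z i" using i sm by (simp add: strict_mono_less_eq)
      moreover have "z i < z (-1)" using i sm by (simp add: strict_mono_less)
      ultimately show "i \<in> {i. z i \<in> {y n<..<0}}" using zm z1 by auto
    qed
    have "card {- int m..-2} \<le> card {i. z i \<in> {y n<..<0}}"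
      using ev nn0 by (intro card_mono sub) auto
    also have "\<dots> \<le> m - 2" using ev nn0 Kle by (meson order_trans)
    finally have "nat (-2 + int m + 1) \<le> m - 2" by simp
    then show False using m2 by linarith
  qed
  have "Lam lam (z (- int m)) \<le> Lam lam (y n)" using zy Lam_le_iff by blast
  then have "real_of_int F \<le> - Lam lam (z (- int m))" using y[of n] Sn by linarith
  moreover have "(real m - 2) / r - 1 \<le> real_of_int F" unfolding F_def by linarith
  moreover have "real m / r - 3 \<le> (real m - 2) / r - 1"
    using r by (simp add: field_simps)
  ultimately show "real m / r - 3 \<le> - Lam lam (z (- int m))" by linarith
qed

lemma poisson_single:
  assumes P: "poisson_process lam P" and A: "A \<in> sets borel" "bounded A"
  shows "measure P {z. finite {i. z i \<in> A} \<and> npts z A = j} = poisson_prob (LINT x:A|lborel. lam x) j"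
proof -
  have "measure P {z. \<forall>k<(1::nat). finite {i. z i \<in> (\<lambda>_. A) k} \<and> npts z ((\<lambda>_. A) k) = (\<lambda>_. j) k}
      = (\<Prod>k<(1::nat). poisson_prob (LINT x:(\<lambda>_. A) k|lborel. lam x) ((\<lambda>_. j) k))"
    using P A unfolding poisson_process_def
    by (intro conjunct2[OF conjunct2[OF conjunct2[OF P[unfolded poisson_process_def]]], rule_format])
       (auto simp: disjoint_family_on_def)
  then show ?thesis by simp
qed

lemma poisson_lln:
  assumes P: "poisson_process lam P" and r: "1 < r"
  shows "AE z in P. \<exists>M0. \<forall>m\<ge>M0. real m / r - 3 \<le> - Lam lam (z (- int m))"
proof -
  have ps: "prob_space P" and ae0: "AE z in P. strict_mono z \<and> z (-1) \<le> 0 \<and> 0 < z 0"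
    using P unfolding poisson_process_def by auto
  interpret prob_space P by fact
  define y where "y n = (SOME y. Lam lam y = - real (Suc n))" for n
  have y: "Lam lam (y n) = - real (Suc n)" for n
    unfolding y_def using Lam_surj by (rule someI_ex)
  have y0: "y n < 0" for n
  proof -
    have "Lam lam (y n) < Lam lam 0" using y[of n] Lam_0 by simp
    then show ?thesis using Lam_le_iff[of 0 "y n"] by linarith
  qed
  define A where "A n = {y n<..<0}" for n
  have intA: "(LINT x:A n|lborel. lam x) = real (Suc n)" for n
  proof -
    have "(LBINT s=ereal (y n)..ereal 0. lam s) = Lam lam 0 - Lam lam (y n)" by (rule Lam_diff)
    moreover have "(LBINT s=ereal (y n)..ereal 0. lam s) = (LINT x:A n|lborel. lam x)"
      using y0[of n] by (simp add: interval_lebesgue_integral_le_eq A_def)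
    ultimately show ?thesis using y[of n] Lam_0 by simp
  qed
  define E where "E n j = {z. finite {i. z i \<in> A n} \<and> npts z (A n) = j}" for n j
  have pE: "measure P (E n j) = poisson_prob (real (Suc n)) j" for n j
    unfolding E_def using poisson_single[OF P, of "A n" j] intA[of n]
    by (simp add: A_def)
  have Esets: "E n j \<in> sets P" for n j
  proof (rule ccontr)
    assume "E n j \<notin> sets P"
    then have "measure P (E n j) = 0" by (rule measure_notin_sets)
    moreover have "poisson_prob (real (Suc n)) j > 0" by (simp add: poisson_prob_def)
    ultimately show False using pE by simp
  qed
  define K where "K n = nat \<lfloor>r * real (Suc n)\<rfloor>" for n
  define G where "G n = (\<Union>j\<in>{..K n}. E n j)" for n
  have Gsets: "G n \<in> sets P" for n unfolding G_def using Esets by auto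
  have pG: "prob (G n) = (\<Sum>j\<le>K n. poisson_prob (real (Suc n)) j)" for n
  proof -
    have "prob (G n) = (\<Sum>j\<le>K n. prob (E n j))"
      unfolding G_def
      by (rule measure_finite_Union) (use Esets in \<open>auto simp: disjoint_family_on_def E_def\<close>)
    then show ?thesis by (simp add: pE)
  qed
  define B where "B n = space P - G n" for n
  have Bsets: "B n \<in> sets P" for n unfolding B_def using Gsets by auto
  define s where "s = (1 + r) / 2"
  have s: "1 < s" "s < r" using r by (auto simp: s_def)
  define q where "q = exp (s - 1 - r * ln s)"
  have q: "0 < q" "q < 1" using chernoff_exponent[OF s] by (auto simp: q_def)
  have pB: "prob (B n) \<le> q ^ Suc n" for n
  proof -
    have "prob (B n) = 1 - prob (G n)" unfolding B_def by (rule prob_compl[OF Gsets])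
    also have "\<dots> \<le> q ^ Suc n" unfolding pG K_def q_def by (rule poisson_tail_geom[OF s])
    finally show ?thesis .
  qed
  have "summable (\<lambda>n. q ^ Suc n)"
    using summable_mult[OF summable_geometric[of q], of q] q by simp
  then have sB: "summable (\<lambda>n. prob (B n))"
    by (rule summable_comparison_test') (use pB in auto)
  have "AE z in P. eventually (\<lambda>n. z \<in> space P - B n) sequentially"
    by (rule borel_cantelli_AE1) (use Bsets sB in \<open>auto simp: less_top[symmetric]\<close>)
  with ae0 show ?thesis
  proof eventually_elim
    case (elim z)
    then obtain n0 where n0: "\<forall>n\<ge>n0. z \<in> space P - B n" by (auto simp: eventually_sequentially)
    have ev: "\<forall>n\<ge>n0. finite {i. z i \<in> {y n<..<0}} \<and> card {i. z i \<in> {y n<..<0}} \<le> nat \<lfloor>r * real (Suc n)\<rfloor>"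
    proof (intro allI impI)
      fix n assume "n0 \<le> n"
      then have "z \<in> G n" using n0 by (auto simp: B_def)
      then show "finite {i. z i \<in> {y n<..<0}} \<and> card {i. z i \<in> {y n<..<0}} \<le> nat \<lfloor>r * real (Suc n)\<rfloor>"
        by (auto simp: G_def E_def K_def A_def npts_def)
    qed
    show ?case using det_count[of z r n0 y] elim ev r y by blast
  qed
qed

end



abbreviation "PI \<equiv> PiM (UNIV::int set) (\<lambda>_. (borel :: real measure))"

lemma shift_meas_PI:
  fixes d :: int
  shows "(\<lambda>\<eta> i. \<eta> (i + d)) \<in> PI \<rightarrow>\<^sub>M PI"
  by (rule measurable_PiM_single') (auto simp: space_PiM)

lemma funpow_R: "((\<lambda>\<eta>::int\<Rightarrow>real. \<lambda>i. \<eta> (i - 1)) ^^ j) \<eta> = (\<lambda>i. \<eta> (i - int j))"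
  by (induction j arbitrary: \<eta>) (auto simp: algebra_simps)

lemma service_lln:
  assumes Q: "stationary_ergodic_service Q"
    and mean: "\<And>i. integrable Q (\<lambda>\<eta>. \<eta> i) \<and> (\<integral>\<eta>. \<eta> i \<partial>Q) = 1"
    and b: "1 < b"
  shows "AE \<eta> in Q. \<exists>K0. \<forall>k\<ge>K0. (\<Sum>j<k. max 0 (\<eta> (-1 - int j))) \<le> b * real k"
proof -
  have ps: "prob_space Q" and sQ: "sets Q = sets PI" and pos: "AE \<eta> in Q. \<forall>i. 0 < \<eta> i"
    and stat: "distr Q PI seq_shift = Q"
    and erg: "\<And>A. A \<in> sets Q \<Longrightarrow> seq_shift -` A \<inter> space Q = A \<Longrightarrow> measure Q A = 0 \<or> measure Q A = 1"
    using Q unfolding stationary_ergodic_service_def by auto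
  have spQ: "space Q = UNIV" using sets_eq_imp_space_eq[OF sQ] by (simp add: space_PiM)
  define R where "R = (\<lambda>\<eta>::int\<Rightarrow>real. \<lambda>i. \<eta> (i - 1))"
  have RPI: "R \<in> PI \<rightarrow>\<^sub>M PI" unfolding R_def using shift_meas_PI[of "-1"] by simp
  have sPI: "seq_shift \<in> PI \<rightarrow>\<^sub>M PI" unfolding seq_shift_def[abs_def] using shift_meas_PI[of 1] by simp
  have RQ: "R \<in> Q \<rightarrow>\<^sub>M Q" using RPI by (simp add: measurable_cong_sets[OF sQ sQ])
  have sQPI: "seq_shift \<in> Q \<rightarrow>\<^sub>M PI" using sPI by (simp add: measurable_cong_sets[OF sQ refl])
  have Rs: "R \<circ> seq_shift = (\<lambda>x. x)" by (auto simp: R_def seq_shift_def)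
  have sR: "seq_shift (R x) = x" for x by (auto simp: R_def seq_shift_def)
  have "distr Q Q R = distr Q PI R" by (rule distr_cong) (auto simp: sQ)
  also have "\<dots> = distr (distr Q PI seq_shift) PI R" by (simp only: stat)
  also have "\<dots> = distr Q PI (R \<circ> seq_shift)" by (rule distr_distr[OF RPI sQPI])
  also have "\<dots> = Q" unfolding Rs by (rule distr_id2[OF sQ[symmetric]])
  finally have RD: "distr Q Q R = Q" .
  have ergR: "measure Q A = 0 \<or> measure Q A = 1" if A: "A \<in> sets Q" "R -` A \<inter> space Q = A" for A
  proof (rule erg[OF A(1)])
    have "x \<in> A \<longleftrightarrow> R x \<in> A" for x using A(2) by (auto simp: spQ)
    then have "seq_shift x \<in> A \<longleftrightarrow> x \<in> A" for x using sR[of "seq_shift x"] Rs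
      by (metis comp_apply)
    then show "seq_shift -` A \<inter> space Q = A" by (auto simp: spQ)
  qed
  define f where "f \<eta> = max 0 (\<eta> (-1::int))" for \<eta> :: "int \<Rightarrow> real"
  have compm: "(\<lambda>\<eta>. \<eta> i) \<in> borel_measurable Q" for i :: int
    using measurable_component_singleton[of i UNIV "\<lambda>_. borel :: real measure"]
    by (simp add: measurable_cong_sets[OF sQ refl])
  have fm: "f \<in> borel_measurable Q" unfolding f_def using compm[of "-1"] by measurable
  have aef: "AE \<eta> in Q. f \<eta> = \<eta> (-1)" using pos by eventually_elim (auto simp: f_def less_imp_le)
  have fi: "integrable Q f" using integrable_cong_AE[OF fm compm aef] mean by simp
  have fint: "integral\<^sup>L Q f = 1" using integral_cong_AE[OF fm compm aef] mean by simp
  have "AE \<eta> in Q. eventually (\<lambda>k. (\<Sum>j<k. f ((R ^^ j) \<eta>)) \<le> b * real k) sequentially"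
    by (rule ergodic_upper[OF ps RQ RD ergR fm _ fi]) (auto simp: f_def fint b)
  then show ?thesis
  proof eventually_elim
    case (elim \<eta>)
    have "f ((R ^^ j) \<eta>) = max 0 (\<eta> (-1 - int j))" for j
      unfolding R_def funpow_R f_def by simp
    then show ?case using elim by (auto simp: eventually_sequentially)
  qed
qed



lemma AE_product:
  assumes A: "AE x in M. PA x" and B: "AE y in N. PB y" and sf: "sigma_finite_measure N"
  shows "AE w in M \<Otimes>\<^sub>M N. PA (fst w) \<and> PB (snd w)"
proof -
  interpret sigma_finite_measure N by fact
  obtain N1 where N1: "N1 \<in> null_sets M" "{x\<in>space M. \<not> PA x} \<subseteq> N1"
    using A by (auto simp: eventually_ae_filter)
  obtain N2 where N2: "N2 \<in> null_sets N" "{x\<in>space N. \<not> PB x} \<subseteq> N2"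
    using B by (auto simp: eventually_ae_filter)
  have n1: "N1 \<times> space N \<in> null_sets (M \<Otimes>\<^sub>M N)" using N1(1) by (intro times_in_null_sets1) auto
  have n2: "space M \<times> N2 \<in> null_sets (M \<Otimes>\<^sub>M N)" using N2(1) by (intro times_in_null_sets2) auto
  show ?thesis
  proof (rule AE_I'[OF null_sets.Un[OF n1 n2]])
    show "{x \<in> space (M \<Otimes>\<^sub>M N). \<not> (PA (fst x) \<and> PB (snd x))} \<subseteq> N1 \<times> space N \<union> space M \<times> N2"
      using N1(2) N2(2) by (auto simp: space_pair_measure)
  qed
qed

context rate begin

lemma sum_bound:
  fixes \<eta> :: "int \<Rightarrow> real" and p :: int and k m :: nat
  assumes m: "int m = int k - p"
  shows "(\<Sum>i\<in>{- int k..-1}. \<eta> (i + p))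
     \<le> (\<Sum>j<m. max 0 (\<eta> (-1 - int j))) + (\<Sum>l\<in>{0..\<bar>p\<bar>}. max 0 (\<eta> l))"
proof -
  have "(\<Sum>i\<in>{- int k..-1}. \<eta> (i + p)) \<le> (\<Sum>i\<in>{- int k..-1}. max 0 (\<eta> (i + p)))"
    by (intro sum_mono) auto
  also have "\<dots> = (\<Sum>l\<in>(\<lambda>i. i + p) ` {- int k..-1}. max 0 (\<eta> l))"
    by (subst sum.reindex) (auto simp: inj_on_def)
  also have "\<dots> \<le> (\<Sum>l\<in>{- int m..\<bar>p\<bar>}. max 0 (\<eta> l))"
    by (intro sum_mono2) (use m in auto)
  also have "{- int m..\<bar>p\<bar>} = {- int m..-1} \<union> {0..\<bar>p\<bar>}" by auto
  also have "(\<Sum>l\<in>{- int m..-1} \<union> {0..\<bar>p\<bar>}. max 0 (\<eta> l))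
      = (\<Sum>l\<in>{- int m..-1}. max 0 (\<eta> l)) + (\<Sum>l\<in>{0..\<bar>p\<bar>}. max 0 (\<eta> l))"
    by (rule sum.union_disjoint) auto
  also have "(\<Sum>l\<in>{- int m..-1}. max 0 (\<eta> l)) = (\<Sum>j<m. max 0 (\<eta> (-1 - int j)))"
    by (rule sum.reindex_bij_witness[of _ "\<lambda>j. -1 - int j" "\<lambda>l. nat (-1 - l)"]) auto
  finally show ?thesis .
qed

lemma final_det:
  fixes z \<eta> :: "int \<Rightarrow> real"
  assumes r: "0 < r" and b: "0 < b" and c: "0 < c" and rbc: "r * b * c < 1"
    and dens: "\<forall>T\<ge>T0. - Lam lam (-T) \<le> c * T"
    and zb: "\<forall>m\<ge>M0. real m / r - 3 \<le> - Lam lam (z (- int m))"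
    and eb: "\<forall>k\<ge>K0. (\<Sum>j<k. max 0 (\<eta> (-1 - int j))) \<le> b * real k"
  shows "theta_conf lam t (z, \<eta>) \<in> Omega_tilde"
proof -
  define p where "p = (THE k. theta lam t (z (k - 1)) \<le> 0 \<and> 0 < theta lam t (z k))"
  define C where "C = (\<Sum>l\<in>{0..\<bar>p\<bar>}. max 0 (\<eta> l))"
  define g where "g = 1 / r - c * b"
  have g: "0 < g" using rbc r b c by (simp add: g_def field_simps)
  define M1 where "M1 = nat \<lceil>max ((\<bar>T0\<bar> + \<bar>C\<bar>) / b) ((3 + \<bar>t\<bar> + c * \<bar>C\<bar>) / g)\<rceil> + M0 + K0 + 1"
  define N where "N = M1 + nat \<bar>p\<bar>"
  have key: "(\<Sum>i\<in>{- int k..-1}. \<eta> (i + p)) + theta lam t (z (- int k + p)) < 0" if k: "N \<le> k" for k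
  proof (rule ccontr)
    assume contra: "\<not> ?thesis"
    define m where "m = nat (int k - p)"
    have mk: "int m = int k - p" using k by (simp add: m_def N_def)
    have mM1: "M1 \<le> m" using k by (simp add: m_def N_def)
    define X where "X = max ((\<bar>T0\<bar> + \<bar>C\<bar>) / b) ((3 + \<bar>t\<bar> + c * \<bar>C\<bar>) / g)"
    have "nat \<lceil>X\<rceil> + 1 \<le> m" using mM1 unfolding M1_def X_def[symmetric] by linarith
    then have "real (nat \<lceil>X\<rceil> + 1) \<le> real m" by (simp only: of_nat_le_iff)
    then have mX: "X < real m" using real_nat_ceiling_ge[of X] by simp
    have "K0 \<le> m" using mM1 unfolding M1_def by linarith
    then have e1: "(\<Sum>j<m. max 0 (\<eta> (-1 - int j))) \<le> b * real m" using eb by blast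
    have S: "(\<Sum>i\<in>{- int k..-1}. \<eta> (i + p)) \<le> b * real m + C"
      using sum_bound[OF mk, of \<eta>] e1 unfolding C_def by linarith
    define w where "w = theta lam t (z (- int m))"
    have zz: "- int k + p = - int m" using mk by simp
    have Sw: "- (b * real m + C) \<le> w" using contra S unfolding zz w_def by linarith
    define T where "T = b * real m + C"
    have "(\<bar>T0\<bar> + \<bar>C\<bar>) / b < real m" using mX unfolding X_def by linarith
    then have "\<bar>T0\<bar> + \<bar>C\<bar> < b * real m" using b by (simp add: field_simps)
    then have TT0: "T0 \<le> T" unfolding T_def by linarith
    have h3: "Lam lam (-T) \<le> Lam lam w" using Sw Lam_le_iff unfolding T_def by simp
    have h4: "- Lam lam (-T) \<le> c * T" using dens TT0 by blast
    have h1: "Lam lam w = Lam lam (z (- int m)) + t" unfolding w_def by (rule theta_Lam)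
    have "M0 \<le> m" using mM1 unfolding M1_def by linarith
    then have h2: "real m / r - 3 \<le> - Lam lam (z (- int m))" using zb by blast
    have h5: "c * T = c * b * real m + c * C" unfolding T_def by (simp add: algebra_simps)
    have "(3 + \<bar>t\<bar> + c * \<bar>C\<bar>) / g < real m" using mX unfolding X_def by linarith
    then have h6: "3 + \<bar>t\<bar> + c * \<bar>C\<bar> < real m * g" using g by (simp add: field_simps)
    have h7: "real m * g = real m / r - c * b * real m" unfolding g_def by (simp add: algebra_simps)
    have h8: "c * C \<le> c * \<bar>C\<bar>" using c by (intro mult_left_mono) auto
    show False using h1 h2 h3 h4 h5 h6 h7 h8 by linarith
  qed
  have "{k::nat. 1 \<le> k \<and> \<not> ((\<Sum>i\<in>{- int k..-1}. \<eta> (i + p)) + theta lam t (z (- int k + p)) < 0)} \<subseteq> {..<N}"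
    using key by (auto simp: not_less[symmetric])
  then have fin: "finite {k::nat. 1 \<le> k \<and> \<not> ((\<Sum>i\<in>{- int k..-1}. \<eta> (i + p)) + theta lam t (z (- int k + p)) < 0)}"
    by (rule finite_subset) auto
  show ?thesis
    unfolding theta_conf_def Let_def Omega_tilde_def
    using fin unfolding p_def by simp
qed

end


theorem lemma2:
  fixes lam :: "real \<Rightarrow> real"
    and P Q :: "(int \<Rightarrow> real) measure"
  assumes lam_cont: "continuous_on UNIV lam"
    and lam_pos: "\<And>x. 0 < lam x"
    and lam_int_neg: "filterlim (\<lambda>T::real. LBINT x=ereal (-T)..0. lam x) at_top at_top"
    and lam_int_pos: "filterlim (\<lambda>T::real. LBINT x=0..ereal T. lam x) at_top at_top"
    and lam_density: "Limsup at_top (\<lambda>T::real. ereal ((1 / T) * (LBINT x=ereal (-T)..0. lam x))) < 1"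
    and P: "poisson_process lam P"
    and Q: "stationary_ergodic_service Q"
    and mean: "\<And>i. integrable Q (\<lambda>\<eta>. \<eta> i) \<and> (\<integral>\<eta>. \<eta> i \<partial>Q) = 1"
  shows "AE \<omega> in (P \<Otimes>\<^sub>M Q). \<forall>t::real. theta_conf lam t \<omega> \<in> Omega_tilde"
proof -
  interpret rate lam using lam_cont lam_pos lam_int_neg lam_int_pos by unfold_locales
  obtain c0 where c0: "Limsup at_top (\<lambda>T::real. ereal ((1 / T) * (LBINT x=ereal (-T)..0. lam x))) < ereal c0"
      "ereal c0 < 1"
    using ereal_dense2[OF lam_density] by blast
  define c where "c = max c0 (1/2)"
  have c: "0 < c" "c < 1" using c0(2) by (auto simp: c_def)
  have "Limsup at_top (\<lambda>T::real. ereal ((1 / T) * (LBINT x=ereal (-T)..0. lam x))) < ereal c"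
    using c0(1) by (rule less_le_trans) (simp add: c_def)
  then have "eventually (\<lambda>T. ereal ((1 / T) * (LBINT x=ereal (-T)..0. lam x)) < ereal c) at_top"
    by (rule Limsup_lessD)
  then obtain T1 where T1: "\<And>T. T \<ge> T1 \<Longrightarrow> (1 / T) * (LBINT x=ereal (-T)..0. lam x) < c"
    by (auto simp: eventually_at_top_linorder)
  define T0 where "T0 = max T1 1"
  have dens: "\<forall>T\<ge>T0. - Lam lam (-T) \<le> c * T"
  proof (intro allI impI)
    fix T assume T: "T0 \<le> T"
    then have T': "T1 \<le> T" "0 < T" by (auto simp: T0_def)
    have "(1 / T) * (- Lam lam (-T)) < c" using T1[OF T'(1)] by (simp add: Lam_neg_eq)
    then show "- Lam lam (-T) \<le> c * T" using T'(2) by (simp add: field_simps)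
  qed
  define u where "u = 1 / c"
  have u: "1 < u" using c by (simp add: u_def)
  define b where "b = (1 + u) / 2"
  have b: "1 < b" "b < u" using u by (auto simp: b_def)
  define r where "r = (1 + u / b) / 2"
  have ub: "1 < u / b" using b by (simp add: field_simps)
  have r: "1 < r" using ub by (simp add: r_def)
  have rb: "r * b = (b + u) / 2" using b by (simp add: r_def field_simps)
  have "r * b < u" using rb b by simp
  then have "r * b * c < u * c" using c by (intro mult_strict_right_mono) auto
  also have "u * c = 1" using c by (simp add: u_def)
  finally have rbc: "r * b * c < 1" .
  have aeP: "AE z in P. \<exists>M0. \<forall>m\<ge>M0. real m / r - 3 \<le> - Lam lam (z (- int m))"
    by (rule poisson_lln[OF P r])
  have aeQ: "AE \<eta> in Q. \<exists>K0. \<forall>k\<ge>K0. (\<Sum>j<k. max 0 (\<eta> (-1 - int j))) \<le> b * real k"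
    by (rule service_lln[OF Q mean b(1)])
  have sfQ: "sigma_finite_measure Q"
    using Q by (intro prob_space_imp_sigma_finite) (simp add: stationary_ergodic_service_def)
  from AE_product[OF aeP aeQ sfQ] show ?thesis
  proof eventually_elim
    case (elim w)
    obtain z \<eta> where w: "w = (z, \<eta>)" by (cases w)
    obtain M0 where M0: "\<forall>m\<ge>M0. real m / r - 3 \<le> - Lam lam (z (- int m))" using elim w by auto
    obtain K0 where K0: "\<forall>k\<ge>K0. (\<Sum>j<k. max 0 (\<eta> (-1 - int j))) \<le> b * real k" using elim w by auto
    show ?case unfolding w
      using final_det[of r b c T0 M0 z K0 \<eta>] r b c rbc dens M0 K0 by auto
  qed
qed

end
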